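(* For every instance, $$\mathrm{opt}\text{-}\mathrm{SUM}\le \mathrm{opt}_M\text{-}\mathrm{SUM}\le 2\,\mathrm{opt}\text{-}\mathrm{SUM}\qquad\text{and}\qquad \mathrm{opt}\text{-}\mathrm{MAX}\le \mathrm{opt}_M\text{-}\mathrm{MAX}\le 2\,\mathrm{opt}\text{-}\mathrm{MAX}.$$
   Context: An instance consists of a finite set $E$ of elements with nonnegative weights $(p_e)_{e\in E}$ (normalized $\sum_e p_e=1$ for SUM objectives and $\max_e p_e=1$ for MAX objectives), and $m$ tests; test $i\in[m]$ is a subset $s_i\subseteq E$. A schedule is an infinite test sequence $\sigma_1,\sigma_2,\dots\in[m]$; a stochastic schedule generates it randomly with the distribution of $\sigma_t$ possibly depending on $\sigma_1,\dots,\sigma_{t-1}$; a memoryless schedule draws each $\sigma_t$ independently from a fixed distribution $q$ on $[m]$. Detection time $T(e,t)=\mathbb{E}[1+\min\{h\ge0:e\in s_{\sigma_{t+h}}\}]$, $M_t[e]=\sup_tT(e,t)$, $E_t[e]=\lim_H\frac1H\sum_{t\le H}T(e,t)$. Valid: for every $e$, $M_t[e]<\infty$ and $E_t[e]$ exists, and for every $i$, $\lim_H\frac1H\sum_{t\le H}\Pr[\sigma_t=i]$ exists. $\mathrm{EEP}=\sum_ep_eE_t[e]$, $\mathrm{WEP}=\max_ep_eE_t[e]$. $\mathrm{opt}\text{-}\mathrm{SUM}$ and $\mathrm{opt}\text{-}\mathrm{MAX}$ are the infima of EEP and WEP over valid stochastic schedules; $\mathrm{opt}_M\text{-}\mathrm{SUM}$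 and $\mathrm{opt}_M\text{-}\mathrm{MAX}$ are the infima of EEP and WEP over valid memoryless schedules (equal to $\inf_q\sum_ep_e/Q_e$ and $\inf_q\max_ep_e/Q_e$, $Q_e=\sum_{i:e\in s_i}q_i$). *)

theory Defs
  imports "HOL-Probability.Probability"
begin

text \<open>Instance: elements of type 'e with finite carrier E, weights p, tests
  s 0, ..., s (m-1) (test i is the set s i).  Schedules are indexed from time 0.\<close>

definition seq_space :: "(nat \<Rightarrow> nat) measure" where
  "seq_space = PiM UNIV (\<lambda>_::nat. count_space (UNIV::nat set))"

text \<open>A stochastic schedule: an arbitrary probability distribution on infinite
  sequences of tests in [m] (this covers every adaptive sequential randomisation).\<close>
definition stochastic_schedule :: "nat \<Rightarrow> (nat \<Rightarrow> nat) measure \<Rightarrow> bool" where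
  "stochastic_schedule m M \<longleftrightarrow> prob_space M \<and> sets M = sets seq_space
      \<and> (AE \<omega> in M. \<forall>t. \<omega> t < m)"

definition memoryless_schedule :: "nat \<Rightarrow> (nat \<Rightarrow> nat) measure \<Rightarrow> bool" where
  "memoryless_schedule m M \<longleftrightarrow>
     (\<exists>q :: nat pmf. set_pmf q \<subseteq> {..<m} \<and> M = PiM UNIV (\<lambda>_::nat. measure_pmf q))"

definition wait_time :: "(nat \<Rightarrow> 'e set) \<Rightarrow> 'e \<Rightarrow> (nat \<Rightarrow> nat) \<Rightarrow> nat \<Rightarrow> ennreal" where
  "wait_time s e \<omega> t =
     (if \<exists>h. e \<in> s (\<omega> (t + h)) then of_nat (Suc (LEAST h. e \<in> s (\<omega> (t + h)))) else \<infinity>)"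

definition det_time :: "(nat \<Rightarrow> 'e set) \<Rightarrow> (nat \<Rightarrow> nat) measure \<Rightarrow> 'e \<Rightarrow> nat \<Rightarrow> ennreal" where
  "det_time s M e t = (\<integral>\<^sup>+ \<omega>. wait_time s e \<omega> t \<partial>M)"

definition max_time :: "(nat \<Rightarrow> 'e set) \<Rightarrow> (nat \<Rightarrow> nat) measure \<Rightarrow> 'e \<Rightarrow> ennreal" where
  "max_time s M e = (SUP t. det_time s M e t)"

definition avg_time_seq :: "(nat \<Rightarrow> 'e set) \<Rightarrow> (nat \<Rightarrow> nat) measure \<Rightarrow> 'e \<Rightarrow> nat \<Rightarrow> real" where
  "avg_time_seq s M e H = (\<Sum>t<H. enn2real (det_time s M e t)) / real H"

definition exp_time :: "(nat \<Rightarrow> 'e set) \<Rightarrow> (nat \<Rightarrow> nat) measure \<Rightarrow> 'e \<Rightarrow> real" where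
  "exp_time s M e = lim (avg_time_seq s M e)"

definition valid_schedule ::
  "'e set \<Rightarrow> nat \<Rightarrow> (nat \<Rightarrow> 'e set) \<Rightarrow> (nat \<Rightarrow> nat) measure \<Rightarrow> bool" where
  "valid_schedule E m s M \<longleftrightarrow> stochastic_schedule m M
     \<and> (\<forall>e\<in>E. max_time s M e < \<infinity> \<and> convergent (avg_time_seq s M e))
     \<and> (\<forall>i<m. convergent
           (\<lambda>H. (\<Sum>t<H. measure M {\<omega> \<in> space M. \<omega> t = i}) / real H))"

definition EEP :: "'e set \<Rightarrow> ('e \<Rightarrow> real) \<Rightarrow> (nat \<Rightarrow> 'e set) \<Rightarrow> (nat \<Rightarrow> nat) measure \<Rightarrow> real" where
  "EEP E p s M = (\<Sum>e\<in>E. p e * exp_time s M e)"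

definition WEP :: "'e set \<Rightarrow> ('e \<Rightarrow> real) \<Rightarrow> (nat \<Rightarrow> 'e set) \<Rightarrow> (nat \<Rightarrow> nat) measure \<Rightarrow> real" where
  "WEP E p s M = Max ((\<lambda>e. p e * exp_time s M e) ` E)"

text \<open>Optima as infima in the extended reals (the infimum of the empty set is \<infinity>).\<close>
definition opt_SUM :: "'e set \<Rightarrow> ('e \<Rightarrow> real) \<Rightarrow> nat \<Rightarrow> (nat \<Rightarrow> 'e set) \<Rightarrow> ereal" where
  "opt_SUM E p m s = (INF M \<in> {M. valid_schedule E m s M}. ereal (EEP E p s M))"

definition opt_MAX :: "'e set \<Rightarrow> ('e \<Rightarrow> real) \<Rightarrow> nat \<Rightarrow> (nat \<Rightarrow> 'e set) \<Rightarrow> ereal" where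
  "opt_MAX E p m s = (INF M \<in> {M. valid_schedule E m s M}. ereal (WEP E p s M))"

definition optM_SUM :: "'e set \<Rightarrow> ('e \<Rightarrow> real) \<Rightarrow> nat \<Rightarrow> (nat \<Rightarrow> 'e set) \<Rightarrow> ereal" where
  "optM_SUM E p m s = (INF M \<in> {M. memoryless_schedule m M \<and> valid_schedule E m s M}.
                          ereal (EEP E p s M))"

definition optM_MAX :: "'e set \<Rightarrow> ('e \<Rightarrow> real) \<Rightarrow> nat \<Rightarrow> (nat \<Rightarrow> 'e set) \<Rightarrow> ereal" where
  "optM_MAX E p m s = (INF M \<in> {M. memoryless_schedule m M \<and> valid_schedule E m s M}.
                          ereal (WEP E p s M))"

end

theory Submission
  imports Defs
begin

definition noh :: "(nat \<Rightarrow> 'e set) \<Rightarrow> 'e \<Rightarrow> nat \<Rightarrow> nat \<Rightarrow> (nat \<Rightarrow> nat) set" where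
  "noh s e t k = {\<omega>. \<forall>h<k. e \<notin> s (\<omega> (t + h))}"

lemma wait_series:
  "wait_time s e \<omega> t = (\<Sum>k. indicator (noh s e t k) \<omega> :: ennreal)"
proof (cases "\<exists>h. e \<in> s (\<omega> (t + h))")
  case True
  define L where "L = (LEAST h. e \<in> s (\<omega> (t + h)))"
  have hitL: "e \<in> s (\<omega> (t + L))" unfolding L_def using True by (rule LeastI_ex)
  have ind: "indicator (noh s e t k) \<omega> = (if k \<le> L then 1 else (0::ennreal))" for k
  proof (cases "k \<le> L")
    case True
    have "\<forall>h<k. e \<notin> s (\<omega> (t + h))"
    proof (intro allI impI)
      fix h assume "h < k"
      then have "h < L" using True by simp
      then show "e \<notin> s (\<omega> (t + h))" unfolding L_def by (rule not_less_Least)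
    qed
    then show ?thesis using True by (simp add: noh_def)
  next
    case False
    then have "L < k" by simp
    then have "\<not> (\<forall>h<k. e \<notin> s (\<omega> (t + h)))" using hitL by blast
    then show ?thesis using False by (simp add: noh_def)
  qed
  have "(\<Sum>k. indicator (noh s e t k) \<omega> :: ennreal) = (\<Sum>k\<in>{..L}. indicator (noh s e t k) \<omega>)"
    by (rule suminf_finite) (simp_all add: ind)
  also have "\<dots> = (\<Sum>k\<in>{..L}. 1)" by (rule sum.cong) (simp_all add: ind)
  also have "\<dots> = of_nat (Suc L)" by simp
  finally show ?thesis using True by (simp add: wait_time_def L_def)
next
  case False
  then have ind: "indicator (noh s e t k) \<omega> = ennreal 1" for k
    by (simp add: noh_def)
  have "\<not> summable (\<lambda>_::nat. 1::real)" by (subst summable_const_iff) simp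
  then have "(\<Sum>k. ennreal 1) = \<top>"
    by (intro summable_iff_suminf_neq_top) auto
  then show ?thesis using False by (simp add: wait_time_def ind)
qed

lemma space_seq: "space seq_space = UNIV"
  by (simp add: seq_space_def space_PiM)

lemma comp_sets: "{\<omega>. \<omega> j \<in> B} \<in> sets seq_space"
proof -
  have "(\<lambda>\<omega>. \<omega> j) \<in> measurable seq_space (count_space UNIV)"
    unfolding seq_space_def by (rule measurable_component_singleton) simp
  then have "(\<lambda>\<omega>. \<omega> j) -` B \<inter> space seq_space \<in> sets seq_space"
    by (rule measurable_sets) simp
  then show ?thesis by (simp add: space_seq vimage_def)
qed

lemma noh_sets: "noh s e t k \<in> sets seq_space"
proof (induction k)
  case 0
  have "noh s e t 0 = space seq_space" by (simp add: noh_def space_seq)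
  then show ?case by simp
next
  case (Suc k)
  have "noh s e t (Suc k) = noh s e t k \<inter> {\<omega>. \<omega> (t + k) \<in> {i. e \<notin> s i}}"
    by (auto simp: noh_def less_Suc_eq)
  moreover have "{\<omega>. \<omega> (t + k) \<in> {i. e \<notin> s i}} \<in> sets seq_space" by (rule comp_sets)
  ultimately show ?case using Suc by (metis sets.Int)
qed

lemma det_series:
  assumes "sets M = sets seq_space"
  shows "det_time s M e t = (\<Sum>k. emeasure M (noh s e t k))"
proof -
  have meas: "noh s e t k \<in> sets M" for k using assms noh_sets by simp
  have sp: "space M = UNIV" using sets_eq_imp_space_eq[OF assms] space_seq by simp
  have "det_time s M e t = (\<integral>\<^sup>+ \<omega>. (\<Sum>k. indicator (noh s e t k) \<omega>) \<partial>M)"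
    unfolding det_time_def by (simp add: wait_series)
  also have "\<dots> = (\<Sum>k. \<integral>\<^sup>+ \<omega>. indicator (noh s e t k) \<omega> \<partial>M)"
    by (rule nn_integral_suminf) (intro borel_measurable_indicator meas)
  also have "\<dots> = (\<Sum>k. emeasure M (noh s e t k))"
    by (simp add: meas)
  finally show ?thesis .
qed

lemma wait_meas:
  assumes "sets M = sets seq_space"
  shows "(\<lambda>\<omega>. wait_time s e \<omega> t) \<in> borel_measurable M"
proof -
  have meas: "noh s e t k \<in> sets M" for k using assms noh_sets by simp
  show ?thesis unfolding wait_series
    by (intro borel_measurable_suminf_order borel_measurable_indicator meas)
qed

lemma ev_const_lim: "(\<And>H. H > 0 \<Longrightarrow> f H = c) \<Longrightarrow> f \<longlonglongrightarrow> c"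
  by (rule tendsto_eventually) (auto simp: eventually_sequentially intro!: exI[of _ 1])

lemma pps: "product_prob_space (\<lambda>_::nat. measure_pmf q)"
  by unfold_locales

lemma mless_noh:
  "emeasure (PiM UNIV (\<lambda>_::nat. measure_pmf q)) (noh s e t k)
     = ennreal ((1 - measure_pmf.prob q {i. e \<in> s i}) ^ k)"
proof -
  interpret P: product_prob_space "\<lambda>_::nat. measure_pmf q" UNIV by (rule pps)
  have eq: "noh s e t k = {x\<in>space (PiM UNIV (\<lambda>_::nat. measure_pmf q)). \<forall>i\<in>{t..<t+k}. x i \<in> {i. e \<notin> s i}}"
  proof -
    have "(\<forall>h<k. P (t+h)) \<longleftrightarrow> (\<forall>i\<in>{t..<t+k}. P i)" for P :: "nat \<Rightarrow> bool"
    proof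
      assume a: "\<forall>h<k. P (t+h)"
      show "\<forall>i\<in>{t..<t+k}. P i"
      proof
        fix i assume "i \<in> {t..<t+k}"
        then have "i - t < k" "t + (i - t) = i" by auto
        then show "P i" using a by metis
      qed
    qed auto
    from this[of "\<lambda>i. e \<notin> s (x i)" for x] show ?thesis by (simp add: noh_def space_PiM)
  qed
  have "emeasure (PiM UNIV (\<lambda>_::nat. measure_pmf q)) (noh s e t k)
      = (\<Prod>i\<in>{t..<t+k}. emeasure (measure_pmf q) {i. e \<notin> s i})"
    unfolding eq by (rule P.emeasure_PiM_Collect) auto
  also have "\<dots> = emeasure (measure_pmf q) {i. e \<notin> s i} ^ k" by simp
  also have "emeasure (measure_pmf q) {i. e \<notin> s i} = ennreal (1 - measure_pmf.prob q {i. e \<in> s i})"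
  proof -
    have "{i. e \<notin> s i} = UNIV - {i. e \<in> s i}" by auto
    then have "measure_pmf.prob q {i. e \<notin> s i} = 1 - measure_pmf.prob q {i. e \<in> s i}"
      using measure_pmf.prob_compl[of "{i. e \<in> s i}" q] by simp
    then show ?thesis by (simp add: measure_pmf.emeasure_eq_measure)
  qed
  finally show ?thesis
    by (simp add: ennreal_power measure_pmf.prob_le_1)
qed

lemma mless_det:
  assumes "measure_pmf.prob q {i. e \<in> s i} > 0"
  shows "det_time s (PiM UNIV (\<lambda>_::nat. measure_pmf q)) e t = ennreal (1 / measure_pmf.prob q {i. e \<in> s i})"
proof -
  let ?Q = "measure_pmf.prob q {i. e \<in> s i}"
  have sets: "sets (PiM UNIV (\<lambda>_::nat. measure_pmf q)) = sets seq_space"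
    unfolding seq_space_def by (intro sets_PiM_cong) auto
  have "det_time s (PiM UNIV (\<lambda>_::nat. measure_pmf q)) e t = (\<Sum>k. ennreal ((1 - ?Q) ^ k))"
    by (simp add: det_series[OF sets] mless_noh)
  also have "\<dots> = ennreal (1 / (1 - (1 - ?Q)))"
    using assms measure_pmf.prob_le_1[of q]
    by (intro suminf_ennreal_eq geometric_sums) auto
  finally show ?thesis by simp
qed

lemma mless_valid:
  assumes qm: "set_pmf q \<subseteq> {..<m}" and pos: "\<forall>e\<in>E. measure_pmf.prob q {i. e \<in> s i} > 0"
  shows "valid_schedule E m s (PiM UNIV (\<lambda>_::nat. measure_pmf q))"
    and "memoryless_schedule m (PiM UNIV (\<lambda>_::nat. measure_pmf q))"
    and "\<And>e. e \<in> E \<Longrightarrow> exp_time s (PiM UNIV (\<lambda>_::nat. measure_pmf q)) e = 1 / measure_pmf.prob q {i. e \<in> s i}"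
proof -
  let ?M = "PiM UNIV (\<lambda>_::nat. measure_pmf q)"
  interpret P: product_prob_space "\<lambda>_::nat. measure_pmf q" UNIV by (rule pps)
  have sets: "sets ?M = sets seq_space"
    unfolding seq_space_def by (intro sets_PiM_cong) auto
  have ps: "prob_space ?M" by (rule P.prob_space_axioms)
  have ae: "AE \<omega> in ?M. \<forall>t. \<omega> t < m"
  proof (subst AE_all_countable, intro allI)
    fix t
    show "AE \<omega> in ?M. \<omega> t < m"
      by (rule P.AE_component) (use qm in \<open>auto simp: AE_measure_pmf_iff\<close>)
  qed
  show "memoryless_schedule m ?M" unfolding memoryless_schedule_def using qm by blast
  have avg: "avg_time_seq s ?M e H = 1 / measure_pmf.prob q {i. e \<in> s i}" if "e \<in> E" "H > 0" for e H
    using that pos by (simp add: avg_time_seq_def mless_det)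
  have lim: "avg_time_seq s ?M e \<longlonglongrightarrow> 1 / measure_pmf.prob q {i. e \<in> s i}" if "e \<in> E" for e
    by (rule ev_const_lim) (use avg that in auto)
  show "exp_time s ?M e = 1 / measure_pmf.prob q {i. e \<in> s i}" if "e \<in> E" for e
    unfolding exp_time_def using lim[OF that] by (rule limI)
  have freq: "measure ?M {\<omega> \<in> space ?M. \<omega> t = i} = pmf q i" for t i
  proof -
    have "emeasure ?M {\<omega> \<in> space ?M. \<omega> t \<in> {i}} = emeasure (measure_pmf q) {i}"
      by (rule P.emeasure_PiM_Collect_single) auto
    then show ?thesis by (simp add: measure_def emeasure_pmf_single)
  qed
  show "valid_schedule E m s ?M"
    unfolding valid_schedule_def stochastic_schedule_def
  proof (intro conjI ballI allI impI)
    show "prob_space ?M" by (rule ps)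
    show "sets ?M = sets seq_space" by (rule sets)
    show "AE \<omega> in ?M. \<forall>t. \<omega> t < m" by (rule ae)
  next
    fix e assume e: "e \<in> E"
    show "max_time s ?M e < \<infinity>"
      using e pos by (simp add: max_time_def mless_det)
    show "convergent (avg_time_seq s ?M e)"
      using lim[OF e] by (rule convergentI)
  next
    fix i assume "i < m"
    have "(\<lambda>H. (\<Sum>t<H. measure ?M {\<omega> \<in> space ?M. \<omega> t = i}) / real H) \<longlonglongrightarrow> pmf q i"
      by (rule ev_const_lim) (simp add: freq)
    then show "convergent (\<lambda>H. (\<Sum>t<H. measure ?M {\<omega> \<in> space ?M. \<omega> t = i}) / real H)"
      by (rule convergentI)
  qed
qed



lemma sum_real_k: "(\<Sum>k<K. real k) = real K * (real K - 1) / 2"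
  by (induction K) (auto simp: field_simps)

lemma arith_K:
  fixes H c :: real
  assumes "H \<ge> 0" "c \<ge> 1"
  defines "K \<equiv> real (nat \<lceil>H / c\<rceil>)"
  shows "K * H - c * (K * (K - 1) / 2) \<ge> H^2 / (2 * c)"
proof -
  define x where "x = H / c"
  have x0: "x \<ge> 0" using assms by (simp add: x_def)
  have Hx: "H = c * x" using assms by (simp add: x_def)
  have c0: "\<lceil>x\<rceil> \<ge> 0" using x0 by simp
  have Kc: "K = of_int \<lceil>x\<rceil>" unfolding K_def x_def[symmetric] using c0 by simp
  have K1: "K \<ge> x" "K < x + 1" using ceiling_correct[of x] unfolding Kc by linarith+
  have "(K - x) * (K - x) \<le> (K - x) * 1" using K1 by (intro mult_left_mono) auto
  then have sq: "(K - x)^2 \<le> K - x" by (simp add: power2_eq_square)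
  have "K * H - c * (K * (K - 1) / 2) - H^2 / (2 * c) = c / 2 * (K - (K - x)^2)"
    using assms(2) by (simp add: Hx field_simps power2_eq_square) 
  also have "\<dots> \<ge> 0" using sq x0 assms(2) by (intro mult_nonneg_nonneg) auto
  finally show ?thesis by simp
qed
lemma hit_count:
  fixes P :: "nat \<Rightarrow> bool"
  shows "card {t\<in>{..<H}. \<exists>h<k. P (t+h)} \<le> card {t\<in>{..<H}. P t} * k + k"
proof -
  let ?J = "{t\<in>{..<H}. P t}"
  have sub: "{t\<in>{..<H}. \<exists>h<k. P (t+h)} \<subseteq> (\<lambda>(j,h). j - h) ` (?J \<times> {..<k}) \<union> {H-k..<H}"
  proof
    fix t assume "t \<in> {t\<in>{..<H}. \<exists>h<k. P (t+h)}"
    then obtain h where t: "t < H" "h < k" "P (t+h)" by auto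
    show "t \<in> (\<lambda>(j,h). j - h) ` (?J \<times> {..<k}) \<union> {H-k..<H}"
    proof (cases "t + h < H")
      case True
      then have "(t+h, h) \<in> ?J \<times> {..<k}" using t by auto
      moreover have "t = (\<lambda>(j,h). j - h) (t+h, h)" by simp
      ultimately show ?thesis by blast
    next
      case False
      then show ?thesis using t by auto
    qed
  qed
  have "card {t\<in>{..<H}. \<exists>h<k. P (t+h)} \<le> card ((\<lambda>(j,h). j - h) ` (?J \<times> {..<k}) \<union> {H-k..<H})"
    by (rule card_mono[OF _ sub]) auto
  also have "\<dots> \<le> card ((\<lambda>(j,h). j - h) ` (?J \<times> {..<k})) + card {H-k..<H}"
    by (rule card_Un_le)
  also have "\<dots> \<le> card (?J \<times> {..<k}) + k"
    by (intro add_mono card_image_le) auto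
  also have "\<dots> = card ?J * k + k" by (simp add: card_cartesian_product)
  finally show ?thesis .
qed

lemma noh_count:
  "real (card {t\<in>{..<H}. \<omega> \<in> noh s e t k}) \<ge> real H - real k * (real (card {t\<in>{..<H}. e \<in> s (\<omega> t)}) + 1)"
proof -
  let ?A = "{t\<in>{..<H}. \<omega> \<in> noh s e t k}" and ?B = "{t\<in>{..<H}. \<exists>h<k. e \<in> s (\<omega> (t+h))}"
  have "?A \<union> ?B = {..<H}" by (auto simp: noh_def)
  moreover have "?A \<inter> ?B = {}" by (auto simp: noh_def)
  ultimately have "card ?A + card ?B = H"
    using card_Un_disjoint[of ?A ?B] by simp
  moreover have "card ?B \<le> card {t\<in>{..<H}. e \<in> s (\<omega> t)} * k + k"
    by (rule hit_count[of H k "\<lambda>j. e \<in> s (\<omega> j)"])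
  ultimately have "H \<le> card ?A + card {t\<in>{..<H}. e \<in> s (\<omega> t)} * k + k" by linarith
  then have "real H \<le> real (card ?A + card {t\<in>{..<H}. e \<in> s (\<omega> t)} * k + k)" by (rule of_nat_mono)
  then have "real (card ?A) + real (card {t\<in>{..<H}. e \<in> s (\<omega> t)}) * real k + real k \<ge> real H"
    by simp
  then show ?thesis by (simp add: algebra_simps)
qed

lemma wait_sum_bound:
  "(\<Sum>t<H. wait_time s e \<omega> t) \<ge> ennreal (real H ^ 2 / (2 * (real (card {t\<in>{..<H}. e \<in> s (\<omega> t)}) + 1)))"
proof -
  define c where "c = real (card {t\<in>{..<H}. e \<in> s (\<omega> t)}) + 1"
  define K where "K = nat \<lceil>real H / c\<rceil>"
  have c1: "c \<ge> 1" by (simp add: c_def)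
  define cnt where "cnt k = card {t\<in>{..<H}. \<omega> \<in> noh s e t k}" for k
  have ind: "(\<Sum>t<H. indicator (noh s e t k) \<omega> :: ennreal) = of_nat (cnt k)" for k
  proof -
    have "(\<Sum>t<H. indicator (noh s e t k) \<omega> :: ennreal) = (\<Sum>t<H. if \<omega> \<in> noh s e t k then 1 else 0)"
      by (rule sum.cong) auto
    also have "\<dots> = (\<Sum>t\<in>{t\<in>{..<H}. \<omega> \<in> noh s e t k}. 1)"
      by (rule sum.inter_filter[symmetric]) simp
    finally show ?thesis by (simp add: cnt_def)
  qed
  have "(\<Sum>t<H. wait_time s e \<omega> t) = (\<Sum>t<H. \<Sum>k. indicator (noh s e t k) \<omega> :: ennreal)"
    by (simp add: wait_series)
  also have "\<dots> = (\<Sum>k. \<Sum>t<H. indicator (noh s e t k) \<omega> :: ennreal)"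
    by (rule suminf_sum[symmetric]) (rule summableI)
  also have "\<dots> = (\<Sum>k. of_nat (cnt k) :: ennreal)" by (simp add: ind)
  finally have eq: "(\<Sum>t<H. wait_time s e \<omega> t) = (\<Sum>k. of_nat (cnt k) :: ennreal)" .
  have "(\<Sum>k<K. of_nat (cnt k) :: ennreal) \<le> (\<Sum>k. of_nat (cnt k) :: ennreal)"
    by (rule sum_le_suminf[OF summableI]) auto
  moreover have "(\<Sum>k<K. of_nat (cnt k) :: ennreal) = ennreal (\<Sum>k<K. real (cnt k))"
    by (simp add: ennreal_of_nat_eq_real_of_nat sum_ennreal)
  moreover have "(\<Sum>k<K. real (cnt k)) \<ge> (\<Sum>k<K. real H - real k * c)"
    by (rule sum_mono) (use noh_count in \<open>simp add: cnt_def c_def\<close>)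
  moreover have "(\<Sum>k<K. real H - real k * c) = real K * real H - c * (real K * (real K - 1) / 2)"
  proof -
    have "(\<Sum>k<K. real H - real k * c) = real K * real H - c * (\<Sum>k<K. real k)"
      by (simp add: sum_subtractf sum_distrib_left mult.commute)
    then show ?thesis by (simp add: sum_real_k)
  qed
  moreover have "real K * real H - c * (real K * (real K - 1) / 2) \<ge> real H ^ 2 / (2 * c)"
    unfolding K_def by (rule arith_K) (use c1 in auto)
  ultimately have "ennreal (real H ^ 2 / (2 * c)) \<le> (\<Sum>k. of_nat (cnt k) :: ennreal)"
  proof -
    assume a: "(\<Sum>k<K. of_nat (cnt k) :: ennreal) \<le> (\<Sum>k. of_nat (cnt k) :: ennreal)"
      "(\<Sum>k<K. of_nat (cnt k) :: ennreal) = ennreal (\<Sum>k<K. real (cnt k))"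
      "(\<Sum>k<K. real (cnt k)) \<ge> (\<Sum>k<K. real H - real k * c)"
      "(\<Sum>k<K. real H - real k * c) = real K * real H - c * (real K * (real K - 1) / 2)"
      "real K * real H - c * (real K * (real K - 1) / 2) \<ge> real H ^ 2 / (2 * c)"
    have "ennreal (real H ^ 2 / (2 * c)) \<le> ennreal (\<Sum>k<K. real (cnt k))"
      by (rule ennreal_leI) (use a(3-5) in linarith)
    then show ?thesis using a(1,2) by simp
  qed
  then show ?thesis using eq by (simp add: c_def)
qed


lemma tangent_inv:
  fixes y a :: real assumes "y > 0" "a > 0"
  shows "2 / a - y / a^2 \<le> 1 / y"
proof -
  have "1 / y - (2 / a - y / a^2) = (a - y)^2 / (y * a^2)"
    using assms by (simp add: field_simps power2_eq_square)
  moreover have "(a - y)^2 / (y * a^2) \<ge> 0" using assms by simp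
  ultimately show ?thesis by linarith
qed

lemma card_as_sum:
  fixes H :: nat
  assumes that: "\<And>t. P t \<longleftrightarrow> P' \<omega>0 t"
  shows "real (card {t\<in>{..<H}. P t}) = (\<Sum>t<H. indicator {\<omega>. P' \<omega> t} \<omega>0 :: real)"
proof -
  have "(\<Sum>t<H. indicator {\<omega>. P' \<omega> t} \<omega>0 :: real) = (\<Sum>t<H. if P t then 1 else 0)"
    by (rule sum.cong) (auto simp: that)
  also have "\<dots> = (\<Sum>t\<in>{t\<in>{..<H}. P t}. 1)"
    by (rule sum.inter_filter[symmetric]) simp
  finally show ?thesis by simp
qed

lemma det_sum_bound:
  assumes ps: "prob_space M" and sets: "sets M = sets seq_space"
  shows "(\<Sum>t<H. det_time s M e t) \<ge>
     ennreal (real H ^ 2 / (2 * ((\<Sum>t<H. measure M {\<omega>. e \<in> s (\<omega> t)}) + 1)))"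
proof -
  interpret prob_space M by (rule ps)
  define C where "C t = {\<omega>::nat\<Rightarrow>nat. e \<in> s (\<omega> t)}" for t
  have Cs: "C t \<in> sets M" for t
    using comp_sets[of t "{i. e \<in> s i}"] sets by (simp add: C_def)
  have sp: "space M = UNIV" using sets_eq_imp_space_eq[OF sets] space_seq by simp
  define N where "N \<omega> = (\<Sum>t<H. indicator (C t) \<omega> :: real)" for \<omega>
  have cardN: "real (card {t\<in>{..<H}. e \<in> s (\<omega> t)}) = N \<omega>" for \<omega>
    unfolding N_def C_def by (rule card_as_sum) simp
  have Nmeas: "N \<in> borel_measurable M"
    unfolding N_def by (intro borel_measurable_sum borel_measurable_indicator Cs)
  have N0: "N \<omega> \<ge> 0" for \<omega> unfolding N_def by (intro sum_nonneg) auto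
  have NH: "N \<omega> \<le> real H" for \<omega>
  proof -
    have "N \<omega> \<le> (\<Sum>t<H. 1)" unfolding N_def by (intro sum_mono) (auto simp: indicator_def)
    then show ?thesis by simp
  qed
  have intN: "integrable M N"
    by (rule integrable_const_bound[where B="real H"]) (use N0 NH Nmeas in auto)
  define EN where "EN = (\<Sum>t<H. measure M {\<omega>. e \<in> s (\<omega> t)})"
  have EN: "integral\<^sup>L M N = EN"
  proof -
    have "integral\<^sup>L M N = (\<Sum>t<H. integral\<^sup>L M (indicator (C t)))"
      unfolding N_def by (rule Bochner_Integration.integral_sum) (intro integrable_real_indicator Cs, simp add: emeasure_eq_measure)
    also have "\<dots> = EN" by (simp add: EN_def sp C_def)
    finally show ?thesis .
  qed
  have EN0: "EN \<ge> 0" unfolding EN_def by (intro sum_nonneg) simp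
  define a where "a = EN + 1"
  have a1: "a \<ge> 1" using EN0 by (simp add: a_def)
  define g where "g \<omega> = real H ^ 2 / (2 * (N \<omega> + 1))" for \<omega>
  have gmeas: "g \<in> borel_measurable M" unfolding g_def using Nmeas by measurable
  have g0: "g \<omega> \<ge> 0" for \<omega> using N0[of \<omega>] by (simp add: g_def)
  have gB: "g \<omega> \<le> real H ^ 2" for \<omega>
  proof -
    have "2 * (N \<omega> + 1) \<ge> 1" using N0[of \<omega>] by simp
    then show ?thesis unfolding g_def by (simp add: divide_le_eq mult_le_cancel_left1)
  qed
  have intg: "integrable M g"
    by (rule integrable_const_bound[where B="real H ^ 2"]) (use g0 gB gmeas in auto)
  define tg where "tg \<omega> = real H ^ 2 / 2 * (2 / a - (N \<omega> + 1) / a^2)" for \<omega>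
  have tg_eq: "tg = (\<lambda>\<omega>. real H ^ 2 / 2 * (2 / a - 1 / a^2) - real H ^ 2 / (2 * a^2) * N \<omega>)"
    using a1 by (intro ext) (simp add: tg_def field_simps)
  have inttg: "integrable M tg" unfolding tg_eq using intN by simp
  have tg_g: "tg \<omega> \<le> g \<omega>" for \<omega>
  proof -
    have "2 / a - (N \<omega> + 1) / a^2 \<le> 1 / (N \<omega> + 1)"
      by (rule tangent_inv) (use N0[of \<omega>] a1 in auto)
    then have "real H ^ 2 / 2 * (2 / a - (N \<omega> + 1) / a^2) \<le> real H ^ 2 / 2 * (1 / (N \<omega> + 1))"
      by (intro mult_left_mono) auto
    then show ?thesis by (simp add: tg_def g_def)
  qed
  have itg: "integral\<^sup>L M tg = real H ^ 2 / (2 * a)"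
  proof -
    have "integral\<^sup>L M tg = real H ^ 2 / 2 * (2 / a - 1 / a^2) - real H ^ 2 / (2 * a^2) * EN"
      unfolding tg_eq using intN EN by (simp add: prob_space)
    also have "\<dots> = real H ^ 2 / (2 * a)"
    proof -
      have e: "EN = a - 1" by (simp add: a_def)
      show ?thesis unfolding e using a1 by (simp add: field_simps power2_eq_square)
    qed
    finally show ?thesis .
  qed
  have "(\<Sum>t<H. det_time s M e t) = (\<integral>\<^sup>+ \<omega>. (\<Sum>t<H. wait_time s e \<omega> t) \<partial>M)"
    unfolding det_time_def by (rule nn_integral_sum[symmetric]) (rule wait_meas[OF sets])
  also have "\<dots> \<ge> (\<integral>\<^sup>+ \<omega>. ennreal (g \<omega>) \<partial>M)"
    by (intro nn_integral_mono) (metis wait_sum_bound cardN g_def)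
  moreover have "(\<integral>\<^sup>+ \<omega>. ennreal (g \<omega>) \<partial>M) = ennreal (integral\<^sup>L M g)"
    by (rule nn_integral_eq_integral[OF intg]) (simp add: g0)
  moreover have "integral\<^sup>L M g \<ge> real H ^ 2 / (2 * a)"
    using integral_mono[OF inttg intg tg_g] itg by simp
  ultimately show ?thesis
    by (metis EN_def a_def ennreal_leI order_trans)
qed


lemma split_gen:
  assumes st: "stochastic_schedule m M"
  shows "measure M {\<omega>. \<omega> t \<in> X} = (\<Sum>i\<in>X \<inter> {..<m}. measure M {\<omega> \<in> space M. \<omega> t = i})"
proof -
  have ps: "prob_space M" and sets: "sets M = sets seq_space" and ae: "AE \<omega> in M. \<forall>t. \<omega> t < m"
    using st by (auto simp: stochastic_schedule_def)
  interpret prob_space M by (rule ps)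
  have sp: "space M = UNIV" using sets_eq_imp_space_eq[OF sets] space_seq by simp
  have cs: "{\<omega>. \<omega> t \<in> Y} \<in> sets M" for Y using comp_sets[of t Y] sets by simp
  have "measure M {\<omega>. \<omega> t \<in> X} = measure M {\<omega>. \<omega> t \<in> X \<inter> {..<m}}"
  proof (rule measure_eq_AE)
    show "AE \<omega> in M. (\<omega> \<in> {\<omega>. \<omega> t \<in> X}) = (\<omega> \<in> {\<omega>. \<omega> t \<in> X \<inter> {..<m}})"
      using ae by eventually_elim auto
  qed (rule cs)+
  also have "{\<omega>. \<omega> t \<in> X \<inter> {..<m}} = (\<Union>i\<in>X \<inter> {..<m}. {\<omega>. \<omega> t = i})" by auto
  also have "measure M \<dots> = (\<Sum>i\<in>X \<inter> {..<m}. measure M {\<omega>. \<omega> t = i})"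
    by (rule finite_measure_finite_Union) (use cs[of "{i}" for i] in \<open>auto simp: disjoint_family_on_def\<close>)
  finally show ?thesis by (simp add: sp)
qed

lemma sum_one:
  assumes st: "stochastic_schedule m M"
  shows "(\<Sum>i<m. measure M {\<omega> \<in> space M. \<omega> t = i}) = 1"
proof -
  have ps: "prob_space M" and sets: "sets M = sets seq_space"
    using st by (auto simp: stochastic_schedule_def)
  interpret prob_space M by (rule ps)
  have sp: "space M = UNIV" using sets_eq_imp_space_eq[OF sets] space_seq by simp
  have "measure M {\<omega>. \<omega> t \<in> UNIV} = 1" using prob_space sp by simp
  then show ?thesis using split_gen[OF st, of t UNIV] by simp
qed


lemma main_compare:
  assumes valid: "valid_schedule E m s M"
  shows "\<exists>q. set_pmf q \<subseteq> {..<m} \<and> (\<forall>e\<in>E. measure_pmf.prob q {i. e \<in> s i} > 0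
            \<and> 1 / measure_pmf.prob q {i. e \<in> s i} \<le> 2 * exp_time s M e)"
proof -
  have st: "stochastic_schedule m M"
    and fin: "\<And>e. e \<in> E \<Longrightarrow> max_time s M e < \<infinity> \<and> convergent (avg_time_seq s M e)"
    and conv: "\<And>i. i < m \<Longrightarrow> convergent (\<lambda>H. (\<Sum>t<H. measure M {\<omega> \<in> space M. \<omega> t = i}) / real H)"
    using valid by (auto simp: valid_schedule_def)
  have ps: "prob_space M" and sets: "sets M = sets seq_space"
    using st by (auto simp: stochastic_schedule_def)
  interpret prob_space M by (rule ps)
  define F where "F i H = (\<Sum>t<H. measure M {\<omega> \<in> space M. \<omega> t = i}) / real H" for i H
  define f where "f i = (if i < m then lim (F i) else 0)" for i
  have Feq: "F i = (\<lambda>H. (\<Sum>t<H. measure M {\<omega> \<in> space M. \<omega> t = i}) / real H)" for i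
    by (rule ext) (simp add: F_def)
  have Flim: "F i \<longlonglongrightarrow> f i" if "i < m" for i
    using conv[OF that] that by (simp add: f_def Feq convergent_LIMSEQ_iff)
  have F0: "F i H \<ge> 0" for i H unfolding F_def by (intro divide_nonneg_nonneg sum_nonneg) auto
  have f0: "f i \<ge> 0" for i
  proof (cases "i < m")
    case True
    show ?thesis by (rule LIMSEQ_le_const[OF Flim[OF True]]) (use F0 in auto)
  qed (simp add: f_def)
  have sumF: "(\<Sum>i<m. F i H) = 1" if "H > 0" for H
  proof -
    have "(\<Sum>i<m. F i H) = (\<Sum>i<m. \<Sum>t<H. measure M {\<omega> \<in> space M. \<omega> t = i}) / real H"
      unfolding F_def by (simp add: sum_divide_distrib)
    also have "(\<Sum>i<m. \<Sum>t<H. measure M {\<omega> \<in> space M. \<omega> t = i}) = (\<Sum>t<H. \<Sum>i<m. measure M {\<omega> \<in> space M. \<omega> t = i})"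
      by (rule sum.swap)
    also have "\<dots> = real H" by (simp add: sum_one[OF st])
    finally show ?thesis using that by simp
  qed
  have sumf: "(\<Sum>i<m. f i) = 1"
  proof -
    have "(\<lambda>H. \<Sum>i<m. F i H) \<longlonglongrightarrow> (\<Sum>i<m. f i)"
      by (intro tendsto_sum Flim) simp
    moreover have "(\<lambda>H. \<Sum>i<m. F i H) \<longlonglongrightarrow> 1" by (rule ev_const_lim) (simp add: sumF)
    ultimately show ?thesis by (rule LIMSEQ_unique)
  qed
  have int1: "(\<integral>\<^sup>+ x. ennreal (f x) \<partial>count_space UNIV) = 1"
  proof -
    have "(\<integral>\<^sup>+ x. ennreal (f x) \<partial>count_space UNIV) = (\<Sum>i<m. ennreal (f i))"
      by (rule nn_integral_count_space') (auto simp: f_def)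
    also have "\<dots> = ennreal (\<Sum>i<m. f i)" by (rule sum_ennreal) (simp add: f0)
    finally show ?thesis by (simp add: sumf)
  qed
  define q where "q = embed_pmf f"
  have pq: "pmf q i = f i" for i unfolding q_def by (rule pmf_embed_pmf) (simp_all add: f0 int1)
  have setq: "set_pmf q \<subseteq> {..<m}" by (auto simp: set_pmf_iff pq f_def split: if_splits)
  have "\<forall>e\<in>E. measure_pmf.prob q {i. e \<in> s i} > 0
            \<and> 1 / measure_pmf.prob q {i. e \<in> s i} \<le> 2 * exp_time s M e"
  proof
    fix e assume eE: "e \<in> E"
    define A where "A = {i. e \<in> s i} \<inter> {..<m}"
    have finA: "finite A" by (simp add: A_def)
    define Q where "Q = measure_pmf.prob q {i. e \<in> s i}"
    have QA: "Q = (\<Sum>i\<in>A. f i)"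
    proof -
      have "Q = measure_pmf.prob q A"
        unfolding Q_def A_def
        by (rule measure_pmf.finite_measure_eq_AE) (use setq in \<open>auto simp: AE_measure_pmf_iff\<close>)
      also have "\<dots> = (\<Sum>i\<in>A. f i)" using finA by (simp add: measure_measure_pmf_finite pq)
      finally show ?thesis .
    qed
    have Q0: "Q \<ge> 0" unfolding QA by (intro sum_nonneg f0)
    define EN where "EN H = (\<Sum>t<H. measure M {\<omega>. e \<in> s (\<omega> t)})" for H
    define x where "x = (\<lambda>H. (\<Sum>i\<in>A. F i H) + 1 / real H)"
    have EN_eq: "EN H + 1 = real H * x H" if "H > 0" for H
    proof -
      have "EN H = (\<Sum>t<H. \<Sum>i\<in>A. measure M {\<omega> \<in> space M. \<omega> t = i})"
        unfolding EN_def A_def using split_gen[OF st, of _ "{i. e \<in> s i}"] by simp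
      also have "\<dots> = (\<Sum>i\<in>A. \<Sum>t<H. measure M {\<omega> \<in> space M. \<omega> t = i})" by (rule sum.swap)
      also have "\<dots> = (\<Sum>i\<in>A. real H * F i H)"
        by (rule sum.cong) (use that in \<open>simp_all add: F_def\<close>)
      also have "\<dots> = real H * (\<Sum>i\<in>A. F i H)"
        by (simp add: sum_distrib_left)
      finally show ?thesis using that by (simp add: x_def algebra_simps)
    qed
    have xpos: "x H > 0" if "H > 0" for H
    proof -
      have "(\<Sum>i\<in>A. F i H) \<ge> 0" by (intro sum_nonneg F0)
      then show ?thesis using that by (simp add: x_def add_nonneg_pos)
    qed
    have xlim: "x \<longlonglongrightarrow> Q"
    proof -
      have "(\<lambda>H. (\<Sum>i\<in>A. F i H) + 1 / real H) \<longlonglongrightarrow> (\<Sum>i\<in>A. f i) + 0"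
        by (intro tendsto_add tendsto_sum Flim lim_inverse_n') (simp add: A_def)
      then show ?thesis by (simp add: x_def QA)
    qed
    have mt: "max_time s M e < \<infinity>" and cv: "convergent (avg_time_seq s M e)" using fin[OF eE] by auto
    have dfin: "det_time s M e t < \<top>" for t
      using mt unfolding max_time_def by (metis SUP_upper UNIV_I infinity_ennreal_def le_less_trans)
    have key: "1 \<le> 2 * avg_time_seq s M e H * x H" if "H > 0" for H
    proof -
      have b: "(\<Sum>t<H. det_time s M e t) \<ge> ennreal (real H ^ 2 / (2 * (EN H + 1)))"
        using det_sum_bound[OF ps sets, where H=H and s=s and e=e] by (simp add: EN_def)
      have "(\<Sum>t<H. enn2real (det_time s M e t)) = enn2real (\<Sum>t<H. det_time s M e t)"
        by (subst enn2real_sum) (auto simp: dfin)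
      also have "\<dots> \<ge> enn2real (ennreal (real H ^ 2 / (2 * (EN H + 1))))"
        by (rule enn2real_mono[OF b]) (simp add: ennreal_sum_less_top dfin)
      finally have c: "(\<Sum>t<H. enn2real (det_time s M e t)) \<ge> real H ^ 2 / (2 * (real H * x H))"
        using EN_eq[OF that] xpos[OF that] that by simp
      have "avg_time_seq s M e H \<ge> real H ^ 2 / (2 * (real H * x H)) / real H"
        unfolding avg_time_seq_def using c that by (intro divide_right_mono) auto
      also have "real H ^ 2 / (2 * (real H * x H)) / real H = 1 / (2 * x H)"
        using that xpos[OF that] by (simp add: field_simps power2_eq_square)
      finally have "1 / (2 * x H) \<le> avg_time_seq s M e H" .
      then show ?thesis using xpos[OF that] by (simp add: field_simps)
    qed
    have avlim: "avg_time_seq s M e \<longlonglongrightarrow> exp_time s M e"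
      using cv by (simp add: exp_time_def convergent_LIMSEQ_iff)
    have "(\<lambda>H. 2 * avg_time_seq s M e H * x H) \<longlonglongrightarrow> 2 * exp_time s M e * Q"
      by (intro tendsto_mult tendsto_const avlim xlim)
    then have one: "1 \<le> 2 * exp_time s M e * Q"
      by (rule LIMSEQ_le_const) (use key in \<open>auto intro!: exI[of _ 1]\<close>)
    then have Qp: "Q > 0" using Q0 by (cases "Q = 0") auto
    have "1 / Q \<le> 2 * exp_time s M e" using one Qp by (simp add: divide_le_eq mult.commute)
    then show "measure_pmf.prob q {i. e \<in> s i} > 0 \<and> 1 / measure_pmf.prob q {i. e \<in> s i} \<le> 2 * exp_time s M e"
      using Qp by (simp add: Q_def)
  qed
  then show ?thesis using setq by blast
qed


lemma ereal_INF_bound: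
  assumes "\<And>M. M \<in> S \<Longrightarrow> \<exists>M'\<in>S'. f M' \<le> 2 * g M"
  shows "(INF M\<in>S'. ereal (f M)) \<le> 2 * (INF M\<in>S. ereal (g M))"
proof -
  define L where "L = (INF M\<in>S'. ereal (f M))"
  have "ereal (1/2) * L \<le> ereal (g M)" if MS: "M \<in> S" for M
  proof -
    obtain M' where M': "M' \<in> S'" "f M' \<le> 2 * g M" using assms[OF MS] by blast
    have "L \<le> ereal (f M')" unfolding L_def using M'(1) by (rule INF_lower)
    also have "\<dots> \<le> ereal 2 * ereal (g M)" using M'(2) by simp
    finally have "ereal (1/2) * L \<le> ereal (1/2) * (ereal 2 * ereal (g M))"
      by (rule ereal_mult_left_mono) simp
    also have "\<dots> = ereal (g M)" by simp
    finally show ?thesis .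
  qed
  then have "ereal (1/2) * L \<le> (INF M\<in>S. ereal (g M))" by (rule INF_greatest)
  then have "ereal 2 * (ereal (1/2) * L) \<le> ereal 2 * (INF M\<in>S. ereal (g M))"
    by (rule ereal_mult_left_mono) simp
  moreover have "ereal 2 * (ereal (1/2) * L) = L"
    by (simp add: mult.assoc[symmetric])
  ultimately show ?thesis by (simp add: L_def)
qed

theorem theorem3:
  fixes E :: "'e set" and p :: "'e \<Rightarrow> real" and m :: nat and s :: "nat \<Rightarrow> 'e set"
  assumes "finite E"
    and "\<forall>e\<in>E. p e \<ge> 0"
    and "\<forall>i<m. s i \<subseteq> E"
  shows "(sum p E = 1 \<longrightarrow>
            opt_SUM E p m s \<le> optM_SUM E p m s \<and> optM_SUM E p m s \<le> 2 * opt_SUM E p m s)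
       \<and> (E \<noteq> {} \<and> Max (p ` E) = 1 \<longrightarrow>
            opt_MAX E p m s \<le> optM_MAX E p m s \<and> optM_MAX E p m s \<le> 2 * opt_MAX E p m s)"
proof -
  have fE: "finite E" and p0: "\<And>e. e \<in> E \<Longrightarrow> p e \<ge> 0" using assms by auto
  have trans: "\<exists>M'. memoryless_schedule m M' \<and> valid_schedule E m s M'
        \<and> (\<forall>e\<in>E. exp_time s M' e \<le> 2 * exp_time s M e)"
    if v: "valid_schedule E m s M" for M
  proof -
    obtain q where q: "set_pmf q \<subseteq> {..<m}"
      "\<forall>e\<in>E. measure_pmf.prob q {i. e \<in> s i} > 0 \<and> 1 / measure_pmf.prob q {i. e \<in> s i} \<le> 2 * exp_time s M e"
      using main_compare[OF v] by blast
    have pos: "\<forall>e\<in>E. measure_pmf.prob q {i. e \<in> s i} > 0" using q(2) by blast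
    show ?thesis
      using mless_valid[OF q(1) pos] q(2) by (intro exI[of _ "PiM UNIV (\<lambda>_::nat. measure_pmf q)"]) auto
  qed
  have sum_part: "opt_SUM E p m s \<le> optM_SUM E p m s \<and> optM_SUM E p m s \<le> 2 * opt_SUM E p m s"
  proof
    show "opt_SUM E p m s \<le> optM_SUM E p m s"
      unfolding opt_SUM_def optM_SUM_def by (rule INF_superset_mono) auto
    show "optM_SUM E p m s \<le> 2 * opt_SUM E p m s"
      unfolding opt_SUM_def optM_SUM_def
    proof (rule ereal_INF_bound)
      fix M assume "M \<in> {M. valid_schedule E m s M}"
      then obtain M' where M': "memoryless_schedule m M'" "valid_schedule E m s M'"
        "\<forall>e\<in>E. exp_time s M' e \<le> 2 * exp_time s M e" using trans by blast
      have "EEP E p s M' \<le> 2 * EEP E p s M"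
        unfolding EEP_def sum_distrib_left
        by (intro sum_mono) (use M'(3) p0 in \<open>simp add: mult_left_mono mult.left_commute\<close>)
      then show "\<exists>M'\<in>{M. memoryless_schedule m M \<and> valid_schedule E m s M}. EEP E p s M' \<le> 2 * EEP E p s M"
        using M' by blast
    qed
  qed
  have max_part: "opt_MAX E p m s \<le> optM_MAX E p m s \<and> optM_MAX E p m s \<le> 2 * opt_MAX E p m s"
    if ne: "E \<noteq> {}"
  proof
    show "opt_MAX E p m s \<le> optM_MAX E p m s"
      unfolding opt_MAX_def optM_MAX_def by (rule INF_superset_mono) auto
    show "optM_MAX E p m s \<le> 2 * opt_MAX E p m s"
      unfolding opt_MAX_def optM_MAX_def
    proof (rule ereal_INF_bound)
      fix M assume "M \<in> {M. valid_schedule E m s M}"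
      then obtain M' where M': "memoryless_schedule m M'" "valid_schedule E m s M'"
        "\<forall>e\<in>E. exp_time s M' e \<le> 2 * exp_time s M e" using trans by blast
      have "WEP E p s M' \<le> 2 * WEP E p s M"
        unfolding WEP_def
      proof (subst Max_le_iff, goal_cases)
        case 3
        show ?case
        proof
          fix y assume "y \<in> (\<lambda>e. p e * exp_time s M' e) ` E"
          then obtain e where e: "e \<in> E" "y = p e * exp_time s M' e" by blast
          have "y \<le> p e * (2 * exp_time s M e)"
            using e M'(3) p0[OF e(1)] by (simp add: mult_left_mono)
          also have "\<dots> = 2 * (p e * exp_time s M e)" by simp
          also have "\<dots> \<le> 2 * Max ((\<lambda>e. p e * exp_time s M e) ` E)"
            using e fE by (intro mult_left_mono Max_ge) auto
          finally show "y \<le> 2 * Max ((\<lambda>e. p e * exp_time s M e) ` E)" .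
        qed
      qed (use fE ne in auto)
      then show "\<exists>M'\<in>{M. memoryless_schedule m M \<and> valid_schedule E m s M}. WEP E p s M' \<le> 2 * WEP E p s M"
        using M' by blast
    qed
  qed
  show ?thesis using sum_part max_part by blast
qed

end
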